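(* Let $n,m\ge0$ be integers. There exists a nonempty finite multiset $S$ of pairs $(i,j)$ with $0\le i\le n$ and $0\le j\le m$ such that: (1) for each $d\in\{0,1,\dots,n+m\}$ the number of elements of $S$ with $i+j=d$ equals $|S|/(n+m+1)$; (2) for each $i\in\{0,\dots,n\}$ the number of elements of $S$ with first coordinate $i$ equals $|S|/(n+1)$; (3) for each $j\in\{0,\dots,m\}$ the number of elements of $S$ with second coordinate $j$ equals $|S|/(m+1)$.
   Context: Here $S$ is a multiset: pairs may be repeated, and counts include multiplicities. (Equivalently, $S$ is a multiset of quadratic monomials $x_iy_j$ in weighted variables with $\deg x_i=i$, $\deg y_j=j$ in which every degree in $[0,n+m]$, every $x_i$, and every $y_j$ occurs equally often.) *)

theory Defs
  imports Complex_Main "HOL-Library.Multiset"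
begin

end

theory Submission
  imports Defs
begin

definition sx :: "nat \<times> nat \<Rightarrow> nat \<times> nat" where "sx p = (Suc (fst p), snd p)"
definition sy :: "nat \<times> nat \<Rightarrow> nat \<times> nat" where "sy p = (fst p, Suc (snd p))"

fun P :: "nat \<Rightarrow> nat \<Rightarrow> (nat \<times> nat) multiset" where
  "P 0 0 = {#(0,0)#}"
| "P (Suc n) 0 = add_mset (0,0) (image_mset sx (P n 0))"
| "P 0 (Suc m) = add_mset (0,0) (image_mset sy (P 0 m))"
| "P (Suc n) (Suc m) = replicate_mset (Suc n + Suc m choose Suc n) (0,0)
      + image_mset sx (P n (Suc m)) + image_mset sy (P (Suc n) m)"

lemma size_filter_image: "size (filter_mset Q (image_mset f M)) = size (filter_mset (\<lambda>x. Q (f x)) M)"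
  by (simp add: filter_mset_image_mset)

lemma size_filter_rep: "size (filter_mset Q (replicate_mset k x)) = (if Q x then k else 0)"
  by (induct k) auto

lemma P_bound: "p \<in># P n m \<Longrightarrow> fst p \<le> n \<and> snd p \<le> m"
  by (induct n m arbitrary: p rule: P.induct) (auto simp: sx_def sy_def)

lemma P_diag: "d \<le> n+m \<Longrightarrow> size (filter_mset (\<lambda>p. fst p + snd p = d) (P n m)) = (n+m) choose n"
proof (induct n m arbitrary: d rule: P.induct)
  case 1 then show ?case by simp
next
  case (2 n) then show ?case by (cases d) (simp_all add: size_filter_image sx_def)
next
  case (3 m) then show ?case by (cases d) (simp_all add: size_filter_image sy_def)
next
  case (4 n m)
  show ?case
  proof (cases d)
    case 0 then show ?thesis by (simp add: size_filter_image size_filter_rep sx_def sy_def)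
  next
    case (Suc e)
    have a: "size (filter_mset (\<lambda>p. fst p + snd p = e) (P n (Suc m))) = (n + Suc m) choose n"
      using 4 Suc by simp
    have b: "size (filter_mset (\<lambda>p. fst p + snd p = e) (P (Suc n) m)) = (Suc n + m) choose Suc n"
      using 4 Suc by simp
    show ?thesis using a b Suc by (simp add: size_filter_image size_filter_rep sx_def sy_def)
  qed
qed

lemma P_col: "i \<le> n \<Longrightarrow> size (filter_mset (\<lambda>p. fst p = i) (P n m)) = (n+m+1) choose (n+1)"
proof (induct n m arbitrary: i rule: P.induct)
  case 1 then show ?case by simp
next
  case (2 n) then show ?case by (cases i) (simp_all add: size_filter_image sx_def)
next
  case (3 m)
  have "size (filter_mset (\<lambda>p. fst p = 0) (P 0 m)) = m + 1" using 3 by simp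
  then show ?case using 3 by (simp add: size_filter_image sy_def)
next
  case (4 n m)
  show ?case
  proof (cases i)
    case 0
    have b: "size (filter_mset (\<lambda>p. fst p = 0) (P (Suc n) m)) = (Suc n + m + 1) choose Suc (Suc n)"
      using 4 0 by simp
    show ?thesis using b 0 by (simp add: size_filter_image size_filter_rep sx_def sy_def)
  next
    case (Suc e)
    have a: "size (filter_mset (\<lambda>p. fst p = e) (P n (Suc m))) = (n + Suc m + 1) choose Suc n"
      using 4 Suc by simp
    have b: "size (filter_mset (\<lambda>p. fst p = Suc e) (P (Suc n) m)) = (Suc n + m + 1) choose Suc (Suc n)"
      using 4 Suc by simp
    show ?thesis using a b Suc by (simp add: size_filter_image size_filter_rep sx_def sy_def)
  qed
qed

lemma P_row: "j \<le> m \<Longrightarrow> size (filter_mset (\<lambda>p. snd p = j) (P n m)) = (n+m+1) choose n"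
proof (induct n m arbitrary: j rule: P.induct)
  case 1 then show ?case by simp
next
  case (2 n)
  have "size (filter_mset (\<lambda>p. snd p = 0) (P n 0)) = n + 1" using 2 by simp
  then show ?case using 2 by (simp add: size_filter_image sx_def)
next
  case (3 m) then show ?case by (cases j) (simp_all add: size_filter_image sy_def)
next
  case (4 n m)
  show ?case
  proof (cases j)
    case 0
    have b: "size (filter_mset (\<lambda>p. snd p = 0) (P n (Suc m))) = (n + Suc m + 1) choose n"
      using 4 0 by simp
    show ?thesis using b 0 by (simp add: size_filter_image size_filter_rep sx_def sy_def)
  next
    case (Suc e)
    have a: "size (filter_mset (\<lambda>p. snd p = Suc e) (P n (Suc m))) = (n + Suc m + 1) choose n"
      using 4 Suc by simp
    have b: "size (filter_mset (\<lambda>p. snd p = e) (P (Suc n) m)) = (Suc n + m + 1) choose Suc n"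
      using 4 Suc by simp
    show ?thesis using a b Suc by (simp add: size_filter_image size_filter_rep sx_def sy_def)
  qed
qed

lemma P_size: "size (P n m) = (n+m+1) * ((n+m) choose n)"
proof -
  have "size (P n m) = (\<Sum>d\<le>n+m. size (filter_mset (\<lambda>p. fst p + snd p = d) (P n m)))"
  proof -
    have "\<And>M :: (nat\<times>nat) multiset. (\<forall>p\<in>#M. fst p + snd p \<le> n+m) \<Longrightarrow>
       size M = (\<Sum>d\<le>n+m. size (filter_mset (\<lambda>p. fst p + snd p = d) M))"
    proof -
      fix M :: "(nat\<times>nat) multiset"
      show "(\<forall>p\<in>#M. fst p + snd p \<le> n+m) \<Longrightarrow>
       size M = (\<Sum>d\<le>n+m. size (filter_mset (\<lambda>p. fst p + snd p = d) M))"
      proof (induct M)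
        case empty then show ?case by simp
      next
        case (add x M)
        then have "fst x + snd x \<in> {..n+m}" by simp
        then have "(\<Sum>d\<le>n+m. (if fst x + snd x = d then 1 else 0::nat)) = 1"
          by (simp add: sum.delta)
        moreover have "\<And>d. size (filter_mset (\<lambda>p. fst p + snd p = d) (add_mset x M))
            = size (filter_mset (\<lambda>p. fst p + snd p = d) M) + (if fst x + snd x = d then 1 else 0)"
          by simp
        ultimately show ?case using add by (simp only: sum.distrib) simp
      qed
    qed
    moreover have "\<forall>p\<in>#P n m. fst p + snd p \<le> n+m" using P_bound by fastforce
    ultimately show ?thesis by blast
  qed
  also have "\<dots> = (\<Sum>d\<le>n+m. (n+m) choose n)" using P_diag by simp
  finally show ?thesis by simp
qed

theorem lemma6p6:
  fixes n m :: nat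
  shows "\<exists>S :: (nat \<times> nat) multiset.
           S \<noteq> {#} \<and>
           (\<forall>p \<in># S. fst p \<le> n \<and> snd p \<le> m) \<and>
           (\<forall>d \<le> n + m. real (size (filter_mset (\<lambda>p. fst p + snd p = d) S)) = real (size S) / real (n + m + 1)) \<and>
           (\<forall>i \<le> n. real (size (filter_mset (\<lambda>p. fst p = i) S)) = real (size S) / real (n + 1)) \<and>
           (\<forall>j \<le> m. real (size (filter_mset (\<lambda>p. snd p = j) S)) = real (size S) / real (m + 1))"
proof (intro exI conjI allI impI)
  let ?S = "P n m"
  have sz: "size ?S = (n+m+1) * ((n+m) choose n)" by (rule P_size)
  have pos: "(n+m) choose n > 0" by simp
  show "?S \<noteq> {#}" using sz pos by (metis mult_is_0 nat_neq_iff not_less0 size_empty add_is_0 one_neq_zero)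
  show "\<forall>p \<in># ?S. fst p \<le> n \<and> snd p \<le> m" using P_bound by blast
  fix d assume "d \<le> n+m"
  then show "real (size (filter_mset (\<lambda>p. fst p + snd p = d) ?S)) = real (size ?S) / real (n + m + 1)"
    using P_diag[OF \<open>d \<le> n+m\<close>] sz by (simp add: field_simps)
next
  let ?S = "P n m"
  have sz: "size ?S = (n+m+1) * ((n+m) choose n)" by (rule P_size)
  fix i assume "i \<le> n"
  have e: "(n+1) * ((n+m+1) choose (n+1)) = (n+m+1) * ((n+m) choose n)"
    using Suc_times_binomial[of n "n+m"] by simp
  have "real (n+1) * real ((n+m+1) choose (n+1)) = real (size ?S)"
    using e sz by (metis of_nat_mult)
  then show "real (size (filter_mset (\<lambda>p. fst p = i) ?S)) = real (size ?S) / real (n + 1)"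
    using P_col[OF \<open>i \<le> n\<close>, of m] by (simp add: field_simps)
next
  let ?S = "P n m"
  have sz: "size ?S = (n+m+1) * ((n+m) choose n)" by (rule P_size)
  fix j assume "j \<le> m"
  have e: "(m+1) * ((n+m+1) choose n) = (n+m+1) * ((n+m) choose n)"
    using Suc_times_binomial_add[of n m] Suc_times_binomial[of n "n+m"] by (simp add: algebra_simps)
  have "real (m+1) * real ((n+m+1) choose n) = real (size ?S)"
    using e sz by (metis of_nat_mult)
  then show "real (size (filter_mset (\<lambda>p. snd p = j) ?S)) = real (size ?S) / real (m + 1)"
    using P_row[OF \<open>j \<le> m\<close>, of n] by (simp add: field_simps)
qed

end
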